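(* Let $K$ be a field of characteristic zero, $0\ne c\in K$, $\phi$ the $K$-algebra endomorphism of $K[x]$ with $\phi(x)=x+c$, and $\delta=\mathrm{id}-\phi$. Let $a\in K$, $I$ the ideal of $K[x]$ generated by $x^2-ax$, and $\beta=a/c$. For $n\ge0$ set $D_n(t)=\frac{B_{n+1}(t)-B_{n+1}}{(n+1)t}$. Then for all $n\ge0$, $D_n(t)\in\mathbb{Q}[t]$ and $x^n\equiv D_n(\beta)c^n \pmod{\delta(I)}$.
   Context: $\mathrm{id}$ is the identity map of $K[x]$. The Bernoulli polynomials are defined by $\frac{ue^{tu}}{e^u-1}=\sum_{n\ge0}B_n(t)\frac{u^n}{n!}$, and $B_n=B_n(0)$ are the Bernoulli numbers. Congruence modulo the $K$-subspace $\delta(I)$ means the difference lies in $\delta(I)$. *)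

theory Defs
  imports "HOL-Computational_Algebra.Computational_Algebra"
begin

definition shift_hom :: "'a::comm_ring_1 \<Rightarrow> 'a poly \<Rightarrow> 'a poly" where
  "shift_hom c p = pcompose p [:c, 1:]"

definition delta :: "'a::comm_ring_1 \<Rightarrow> 'a poly \<Rightarrow> 'a poly" where
  "delta c p = p - shift_hom c p"

definition ideal_I :: "'a::comm_ring_1 \<Rightarrow> 'a poly set" where
  "ideal_I a = {q * [:0, - a, 1:] | q. True}"

text \<open>Bernoulli numbers B_n = n! [u^n] u/(e^u - 1) (so B_1 = -1/2).\<close>
definition bernoulli_num :: "nat \<Rightarrow> rat" where
  "bernoulli_num n = fact n * fps_nth (fps_X / (fps_exp 1 - 1)) n"

text \<open>Bernoulli polynomials: B_n(t) = n! [u^n] u e^{tu}/(e^u-1)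
  = sum_k (n choose k) B_k t^(n-k) (Cauchy product of the two series).\<close>
definition bernoulli_poly :: "nat \<Rightarrow> rat poly" where
  "bernoulli_poly n = (\<Sum>k\<le>n. smult (of_nat (n choose k) * bernoulli_num k) (monom 1 (n - k)))"

definition D_poly :: "nat \<Rightarrow> rat poly" where
  "D_poly n = (bernoulli_poly (n+1) - [:bernoulli_num (n+1):]) div (smult (of_nat (n+1)) [:0, 1:])"

end

theory Submission imports Defs begin

lemma bern_rec:
  "(\<Sum>k<m. of_nat (m choose k) * bernoulli_num k) = (if m = 1 then 1 else 0)"
proof -
  define f :: "rat fps" where "f = fps_X / (fps_exp 1 - 1)"
  define g :: "rat fps" where "g = fps_exp 1 - 1"
  have g0: "g \<noteq> 0"
  proof
    assume "g = 0" then have "g $ 1 = 0" by simp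
    then show False by (simp add: g_def)
  qed
  have "subdegree g \<le> 1" by (rule subdegree_leI) (simp add: g_def)
  then have fg: "f * g = fps_X"
    unfolding f_def g_def[symmetric] using fps_times_divide_eq[OF g0] by simp
  have gn: "g $ j = (if j = 0 then 0 else 1 / fact j)" for j
    by (simp add: g_def)
  have "(f * g) $ m = (\<Sum>i=0..m. f$i * g$(m - i))" by (rule fps_mult_nth)
  also have "\<dots> = (\<Sum>i<m. f$i / fact (m - i))"
  proof -
    have "(\<Sum>i=0..m. f$i * g$(m - i)) = (\<Sum>i<Suc m. f$i * g$(m - i))"
      by (simp add: atLeast0AtMost lessThan_Suc_atMost)
    also have "\<dots> = (\<Sum>i<m. f$i * g$(m - i))" by (simp add: gn)
    also have "\<dots> = (\<Sum>i<m. f$i / fact (m - i))"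
      by (intro sum.cong) (auto simp: gn)
    finally show ?thesis .
  qed
  finally have e1: "(\<Sum>i<m. f$i / fact (m - i)) = (if m = 1 then 1 else 0)"
    using fg by simp
  have "(\<Sum>k<m. of_nat (m choose k) * bernoulli_num k) = (\<Sum>k<m. fact m * (f$k / fact (m - k)))"
  proof (intro sum.cong refl)
    fix k assume "k \<in> {..<m}"
    then have "k \<le> m" by simp
    then show "of_nat (m choose k) * bernoulli_num k = fact m * (f$k / fact (m - k))"
      by (simp add: binomial_fact bernoulli_num_def f_def)
  qed
  also have "\<dots> = fact m * (\<Sum>i<m. f$i / fact (m - i))" by (simp add: sum_distrib_left)
  also have "\<dots> = (if m = 1 then 1 else 0)" using e1 by simp
  finally show ?thesis .
qed


abbreviation mr :: "rat poly \<Rightarrow> 'a::field_char_0 poly" where "mr \<equiv> map_poly of_rat"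

lemma mr_add: "mr (p + q) = (mr p + mr q :: 'a::field_char_0 poly)"
  by (intro poly_eqI) (simp add: coeff_map_poly of_rat_add)
lemma mr_diff: "mr (p - q) = (mr p - mr q :: 'a::field_char_0 poly)"
  by (intro poly_eqI) (simp add: coeff_map_poly of_rat_diff)
lemma mr_smult: "mr (smult c p) = (smult (of_rat c) (mr p) :: 'a::field_char_0 poly)"
  by (rule map_poly_smult) (simp_all add: of_rat_mult)
lemma mr_mult: "mr (p * q) = (mr p * mr q :: 'a::field_char_0 poly)"
  by (induction p) (simp_all add: map_poly_pCons mr_add mr_smult)
lemma mr_sum: "mr (\<Sum>i\<in>A. f i) = (\<Sum>i\<in>A. mr (f i) :: 'a::field_char_0 poly)"
  by (induction A rule: infinite_finite_induct) (simp_all add: mr_add)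

abbreviation bk :: "nat \<Rightarrow> 'a::field_char_0" where "bk k \<equiv> of_rat (bernoulli_num k)"

lemma poly_bern: "poly (mr (bernoulli_poly m)) (y::'a::field_char_0)
   = (\<Sum>k\<le>m. of_nat (m choose k) * bk k * y ^ (m - k))"
  by (simp add: bernoulli_poly_def mr_sum mr_smult map_poly_monom poly_sum poly_monom of_rat_mult)

lemma bern_rec_K:
  "(\<Sum>k<m. of_nat (m choose k) * (bk k :: 'a::field_char_0)) = (if m = 1 then 1 else 0)"
proof -
  have "of_rat (\<Sum>k<m. of_nat (m choose k) * bernoulli_num k) = (of_rat (if m = 1 then 1 else 0) :: 'a)"
    by (simp only: bern_rec)
  then show ?thesis by (simp add: of_rat_sum of_rat_mult split: if_splits)
qed

lemma choose_swap:
  assumes "j + k \<le> m"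
  shows "(m choose k) * ((m - k) choose j) = (m choose j) * ((m - j) choose k)"
proof -
  have a: "(m choose (k+j)) * ((k+j) choose k) = (m choose k) * ((m - k) choose j)"
    using choose_mult[of k "k+j" m] assms by simp
  have b: "(m choose (k+j)) * ((k+j) choose j) = (m choose j) * ((m - j) choose k)"
    using choose_mult[of j "k+j" m] assms by (simp add: add.commute)
  have "(k+j) choose k = (k+j) choose j" using binomial_symmetric[of k "k+j"] by simp
  with a b show ?thesis by simp
qed

definition S :: "nat \<Rightarrow> 'a::field_char_0 \<Rightarrow> 'a" where
  "S m y = (\<Sum>k\<le>m. of_nat (m choose k) * bk k * y ^ (m - k))"

lemma S_shift: "S m (y + 1) = S m y + (if m \<ge> 1 then of_nat m * y ^ (m - 1) else 0)"
proof -
  let ?F = "\<lambda>k j. if j + k \<le> m then of_nat (m choose k) * of_nat ((m - k) choose j) * bk k * y ^ j else (0::'a)"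
  have "S m (y + 1) = (\<Sum>k\<le>m. of_nat (m choose k) * bk k * (\<Sum>j\<le>m-k. of_nat ((m-k) choose j) * y ^ j))"
    unfolding S_def by (simp add: binomial_ring)
  also have "\<dots> = (\<Sum>k\<le>m. \<Sum>j\<le>m. ?F k j)"
  proof (intro sum.cong refl)
    fix k assume k: "k \<in> {..m}"
    have "(\<Sum>j\<le>m. ?F k j) = (\<Sum>j\<le>m-k. ?F k j)"
      by (intro sum.mono_neutral_right) auto
    also have "\<dots> = (\<Sum>j\<le>m-k. of_nat (m choose k) * bk k * (of_nat ((m-k) choose j) * y ^ j))"
      by (intro sum.cong refl) auto
    finally show "of_nat (m choose k) * bk k * (\<Sum>j\<le>m-k. of_nat ((m-k) choose j) * y ^ j) = (\<Sum>j\<le>m. ?F k j)"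
      by (simp add: sum_distrib_left)
  qed
  also have "\<dots> = (\<Sum>j\<le>m. \<Sum>k\<le>m. ?F k j)" by (rule sum.swap)
  also have "\<dots> = (\<Sum>j\<le>m. of_nat (m choose j) * y ^ j * (\<Sum>k\<le>m-j. of_nat ((m-j) choose k) * bk k))"
  proof (intro sum.cong refl)
    fix j assume j: "j \<in> {..m}"
    have "(\<Sum>k\<le>m. ?F k j) = (\<Sum>k\<le>m-j. ?F k j)"
      by (intro sum.mono_neutral_right) auto
    also have "\<dots> = (\<Sum>k\<le>m-j. of_nat (m choose j) * y ^ j * (of_nat ((m-j) choose k) * bk k))"
    proof (intro sum.cong refl)
      fix k assume "k \<in> {..m-j}"
      then have "j + k \<le> m" using j by auto
      then have "of_nat (m choose k) * of_nat ((m - k) choose j) = (of_nat (m choose j) * of_nat ((m - j) choose k) :: 'a)"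
        using choose_swap[of j k m] by (metis of_nat_mult)
      then show "?F k j = of_nat (m choose j) * y ^ j * (of_nat ((m-j) choose k) * bk k)"
        using \<open>j + k \<le> m\<close> by (simp add: algebra_simps)
    qed
    finally show "(\<Sum>k\<le>m. ?F k j) = of_nat (m choose j) * y ^ j * (\<Sum>k\<le>m-j. of_nat ((m-j) choose k) * bk k)"
      by (simp add: sum_distrib_left)
  qed
  also have "\<dots> = (\<Sum>j\<le>m. of_nat (m choose j) * y ^ j * (bk (m-j) + (if m - j = 1 then 1 else 0)))"
  proof (intro sum.cong refl)
    fix j
    have "(\<Sum>k\<le>m-j. of_nat ((m-j) choose k) * (bk k :: 'a)) = (\<Sum>k<m-j. of_nat ((m-j) choose k) * bk k) + bk (m-j)"
      by (simp add: lessThan_Suc_atMost[symmetric])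
    then show "of_nat (m choose j) * y ^ j * (\<Sum>k\<le>m-j. of_nat ((m-j) choose k) * bk k) =
        of_nat (m choose j) * y ^ j * (bk (m-j) + (if m - j = 1 then 1 else 0))"
      by (simp add: bern_rec_K)
  qed
  also have "\<dots> = (\<Sum>j\<le>m. of_nat (m choose j) * bk (m-j) * y ^ j)
       + (\<Sum>j\<le>m. if m - j = 1 then of_nat (m choose j) * y ^ j else 0)"
    by (simp add: sum.distrib[symmetric] algebra_simps; intro sum.cong refl; simp)
  also have "(\<Sum>j\<le>m. of_nat (m choose j) * bk (m-j) * y ^ j) = S m y"
    unfolding S_def
    by (rule sum.reindex_bij_witness[of _ "\<lambda>k. m - k" "\<lambda>k. m - k"])
       (auto simp: binomial_symmetric[symmetric])
  also have "(\<Sum>j\<le>m. if m - j = 1 then of_nat (m choose j) * y ^ j else (0::'a)) = (if m \<ge> 1 then of_nat m * y ^ (m - 1) else 0)"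
  proof (cases "m \<ge> 1")
    case True
    have "(\<Sum>j\<le>m. if m - j = 1 then of_nat (m choose j) * y ^ j else (0::'a)) = (\<Sum>j\<in>{m-1}. of_nat (m choose j) * y ^ j)"
      by (intro sum.mono_neutral_cong_right) (use True in auto)
    moreover have "m choose (m-1) = m" using binomial_symmetric[of 1 m] True by simp
    ultimately show ?thesis using True by simp
  next
    case False
    then show ?thesis by simp
  qed
  finally show ?thesis .
qed


lemma part1: "smult (of_nat (n+1)) [:0, 1:] dvd (bernoulli_poly (n+1) - [:bernoulli_num (n+1):])"
proof -
  let ?m = "n+1"
  have "poly (bernoulli_poly ?m) 0 = (\<Sum>k\<le>?m. of_nat (?m choose k) * bernoulli_num k * 0 ^ (?m - k))"
    by (simp add: bernoulli_poly_def poly_sum poly_monom)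
  also have "\<dots> = (\<Sum>k\<in>{?m}. of_nat (?m choose k) * bernoulli_num k * 0 ^ (?m - k))"
    by (intro sum.mono_neutral_cong_right) auto
  finally have "poly (bernoulli_poly ?m - [:bernoulli_num ?m:]) 0 = 0" by simp
  then have "[:0, 1:] dvd (bernoulli_poly ?m - [:bernoulli_num ?m:])"
    using poly_eq_0_iff_dvd[of "bernoulli_poly ?m - [:bernoulli_num ?m:]" 0] by simp
  then show ?thesis by (subst smult_dvd_iff) simp
qed

lemma Dk_rel: "poly (mr (bernoulli_poly (n+1))) y - bk (n+1)
   = of_nat (n+1) * y * poly (mr (D_poly n)) (y :: 'a::field_char_0)"
proof -
  have "bernoulli_poly (n+1) - [:bernoulli_num (n+1):] = smult (of_nat (n+1)) [:0, 1:] * D_poly n"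
    unfolding D_poly_def by (rule dvd_mult_div_cancel[OF part1[of n], symmetric])
  then have "mr (bernoulli_poly (n+1) - [:bernoulli_num (n+1):]) = (mr (smult (of_nat (n+1)) [:0, 1:] * D_poly n) :: 'a poly)"
    by simp
  then have "mr (bernoulli_poly (n+1)) - [:bk (n+1):] = (smult (of_nat (n+1)) [:0, 1:] * mr (D_poly n) :: 'a poly)"
    by (simp add: mr_diff mr_mult mr_smult map_poly_pCons del: of_nat_Suc)
  then have "poly (mr (bernoulli_poly (n+1)) - [:bk (n+1):]) y = poly (smult (of_nat (n+1)) [:0, 1:] * mr (D_poly n) :: 'a poly) y"
    by simp
  then show ?thesis by (simp del: of_nat_Suc)
qed

lemma Dk_shift: "(y+1) * poly (mr (D_poly n)) (y+1) - y * poly (mr (D_poly n)) y = (y::'a::field_char_0) ^ n"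
proof -
  have "of_nat (n+1) * ((y+1) * poly (mr (D_poly n)) (y+1) - y * poly (mr (D_poly n)) y)
      = (poly (mr (bernoulli_poly (n+1))) (y+1) - bk (n+1)) - (poly (mr (bernoulli_poly (n+1))) y - bk (n+1))"
    by (simp only: Dk_rel) (simp add: algebra_simps)
  also have "\<dots> = S (n+1) (y+1) - S (n+1) y" by (simp add: poly_bern S_def)
  also have "\<dots> = of_nat (n+1) * y ^ n" by (simp add: S_shift del: of_nat_Suc)
  finally show ?thesis by (simp del: of_nat_Suc)
qed

theorem lemma4p5:
  fixes c a :: "'a::field_char_0" and n :: nat
  assumes "c \<noteq> 0"
  shows "smult (of_nat (n+1)) [:0, 1:] dvd (bernoulli_poly (n+1) - [:bernoulli_num (n+1):])
     \<and> monom 1 n - [: poly (map_poly of_rat (D_poly n)) (a / c) * c ^ n :] \<in> delta c ` ideal_I a"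
proof
  show "smult (of_nat (n+1)) [:0, 1:] dvd (bernoulli_poly (n+1) - [:bernoulli_num (n+1):])"
    by (rule part1)
  define Dk :: "'a poly" where "Dk = mr (D_poly n)"
  define d where "d = poly Dk (a / c)"
  define Dc where "Dc = pcompose Dk [:0, inverse c:]"
  have "poly ([:d:] - Dc) a = 0"
    by (simp add: Dc_def d_def poly_pcompose divide_inverse mult.commute)
  then obtain r where r: "[:d:] - Dc = [:-a, 1:] * r"
    using poly_eq_0_iff_dvd by (metis dvdE)
  define q where "q = smult (c ^ n / c) r"
  define p where "p = q * [:0, -a, 1:]"
  have pI: "p \<in> ideal_I a" unfolding p_def ideal_I_def by blast
  define k where "k = c ^ n / c"
  have kc: "k * c = c ^ n" using assms by (simp add: k_def)
  have pv: "poly p x = k * x * (d - poly Dk (x / c))" for x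
  proof -
    have "poly ([:d:] - Dc) x = (x - a) * poly r x" by (simp only: r) (simp add: algebra_simps)
    then have "d - poly Dk (x / c) = (x - a) * poly r x"
      by (simp add: Dc_def poly_pcompose divide_inverse mult.commute)
    moreover have "poly p x = k * x * ((x - a) * poly r x)"
      by (simp add: p_def q_def k_def algebra_simps)
    ultimately show ?thesis by simp
  qed
  have "delta c p = monom 1 n - [: poly (map_poly of_rat (D_poly n)) (a / c) * c ^ n :]"
  proof (rule poly_eq_poly_eq_iff[THEN iffD1], rule ext)
    fix x
    define y where "y = x / c"
    have xy: "x = c * y" using assms by (simp add: y_def)
    have x2: "x + c = c * (y + 1)" by (simp add: xy algebra_simps)
    have sh: "(y+1) * poly Dk (y+1) - y * poly Dk y = y ^ n"
      unfolding Dk_def by (rule Dk_shift)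
    have "poly (delta c p) x = poly p x - poly p (x + c)"
      by (simp add: delta_def shift_hom_def poly_pcompose add.commute)
    also have "\<dots> = k * (x * (d - poly Dk y) - (x + c) * (d - poly Dk (y + 1)))"
    proof -
      have yc: "(x + c) / c = y + 1" using assms by (simp add: y_def field_simps)
      show ?thesis unfolding pv yc y_def[symmetric] by (simp add: right_diff_distrib)
    qed
    also have "\<dots> = k * c * ((y+1) * poly Dk (y+1) - y * poly Dk y - d)"
      by (simp add: xy x2 algebra_simps)
    also have "\<dots> = c ^ n * (y ^ n - d)" by (simp add: sh kc)
    also have "\<dots> = x ^ n - d * c ^ n" by (simp add: xy power_mult_distrib algebra_simps)
    finally show "poly (delta c p) x = poly (monom 1 n - [: poly (map_poly of_rat (D_poly n)) (a / c) * c ^ n :]) x"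
      by (simp add: poly_monom d_def Dk_def)
  qed
  then show "monom 1 n - [: poly (map_poly of_rat (D_poly n)) (a / c) * c ^ n :] \<in> delta c ` ideal_I a"
    using pI by (metis image_eqI)
qed

end
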